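(* Let $Q$ be a rational function with distinct poles $z_1,\dotsc,z_d$ ($d\ge1$) of orders $r_1,\dotsc,r_d$. Put $P=\prod_{i=1}^d(z-z_i)^{r_i}$ and $P_0=\prod_{i=1}^d(z-z_i)$, and for each $n\ge1$ write $Q^{(n)}=\frac{\alpha_nR_n}{PP_0^n}$ with $\alpha_n\in\mathbb{C}$ and $R_n\in\mathbb{C}[z]$ monic. Then $\lim_{n\to\infty}\frac{\deg R_n}{n}=d-1$. *)

theory Defs
  imports "HOL-Analysis.Analysis" "HOL-Computational_Algebra.Polynomial"
begin

definition pole_poly :: "nat \<Rightarrow> (nat \<Rightarrow> complex) \<Rightarrow> (nat \<Rightarrow> nat) \<Rightarrow> complex poly" where
  "pole_poly d zs r = (\<Prod>i<d. [:- zs i, 1:] ^ r i)"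

definition pole_poly0 :: "nat \<Rightarrow> (nat \<Rightarrow> complex) \<Rightarrow> complex poly" where
  "pole_poly0 d zs = (\<Prod>i<d. [:- zs i, 1:])"

end

theory Submission
  imports Defs
begin


lemma coeff_mult_deg_plus:
  fixes p q :: "'a::idom poly"
  assumes "degree q \<le> k"
  shows "coeff (p * q) (degree p + k) = lead_coeff p * coeff q k"
proof (cases "degree q = k")
  case True then show ?thesis using coeff_mult_degree_sum[of p q] by simp
next
  case False
  then have lt: "degree q < k" using assms by simp
  then have "coeff q k = 0" by (simp add: coeff_eq_0)
  moreover have "coeff (p * q) (degree p + k) = 0"
    using degree_mult_le[of p q] lt by (intro coeff_eq_0) linarith
  ultimately show ?thesis by simp
qed

lemma step_degree:
  fixes N K P0 :: "complex poly"
  assumes "N \<noteq> 0" "d \<ge> 1" "degree P0 = d" "lead_coeff P0 = 1"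
    "degree K \<le> d - 1" "coeff K (d - 1) = of_nat m" "m \<noteq> degree N"
  shows "pderiv N * P0 - N * K \<noteq> 0 \<and> degree (pderiv N * P0 - N * K) = degree N + (d - 1)"
proof -
  define e where "e = degree N"
  have c1: "coeff (pderiv N * P0) (e + (d - 1)) = of_nat e * lead_coeff N"
  proof (cases "e = 0")
    case True
    then have "pderiv N = 0" using pderiv_eq_0_iff e_def by auto
    then show ?thesis using True by simp
  next
    case False
    have dp: "degree (pderiv N) = e - 1" by (simp add: degree_pderiv e_def)
    have "coeff (pderiv N * P0) (degree (pderiv N) + degree P0) = lead_coeff (pderiv N) * lead_coeff P0"
      by (rule coeff_mult_degree_sum)
    moreover have "degree (pderiv N) + degree P0 = e + (d - 1)" using dp False assms by simp
    moreover have "lead_coeff (pderiv N) = of_nat e * lead_coeff N"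
      using dp False by (simp add: coeff_pderiv e_def)
    ultimately show ?thesis using assms by simp
  qed
  have c2: "coeff (N * K) (e + (d - 1)) = lead_coeff N * of_nat m"
    using coeff_mult_deg_plus[of K "d - 1" N] assms by (simp add: e_def)
  have c: "coeff (pderiv N * P0 - N * K) (e + (d - 1)) = lead_coeff N * (of_nat e - of_nat m)"
    using c1 c2 by (simp add: algebra_simps)
  have nz: "coeff (pderiv N * P0 - N * K) (e + (d - 1)) \<noteq> 0"
    using c assms e_def by auto
  have u1: "degree (pderiv N * P0) \<le> e + (d - 1)"
  proof (cases "e = 0")
    case True
    then have "pderiv N = 0" using pderiv_eq_0_iff e_def by auto
    then show ?thesis by simp
  next
    case False
    then show ?thesis
    using degree_mult_le[of "pderiv N" P0] assms by (simp add: degree_pderiv e_def)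
  qed
  have u2: "degree (N * K) \<le> e + (d - 1)"
    using degree_mult_le[of N K] assms by (simp add: e_def)
  have "degree (pderiv N * P0 - N * K) \<le> e + (d - 1)" using u1 u2 degree_diff_le by blast
  moreover have "e + (d - 1) \<le> degree (pderiv N * P0 - N * K)" using nz le_degree by blast
  ultimately show ?thesis using nz e_def by auto
qed

lemma pderiv_funpow_zero: "\<forall>q::complex poly. degree q < n \<longrightarrow> (pderiv ^^ n) q = 0"
proof (induction n)
  case 0 then show ?case by simp
next
  case (Suc n)
  show ?case
  proof (intro allI impI)
    fix q :: "complex poly" assume "degree q < Suc n"
    show "(pderiv ^^ Suc n) q = 0"
    proof (cases n)
      case 0
      then show ?thesis using \<open>degree q < Suc n\<close> pderiv_eq_0_iff[of q] by simp
    next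
      case (Suc m)
      have "degree (pderiv q) < n" using \<open>degree q < Suc n\<close> Suc by (simp add: degree_pderiv)
      then show ?thesis using Suc.IH by (simp add: funpow_Suc_right del: funpow.simps)
    qed
  qed
qed



fun Nrec :: "complex poly \<Rightarrow> complex poly \<Rightarrow> complex poly \<Rightarrow> nat \<Rightarrow> complex poly" where
  "Nrec P0 L A 0 = A"
| "Nrec P0 L A (Suc n) = pderiv (Nrec P0 L A n) * P0 - Nrec P0 L A n * (L + smult (of_nat n) (pderiv P0))"

lemma Nrec_add: "Nrec P0 L (A + B) n = Nrec P0 L A n + Nrec P0 L B n"
  by (induction n) (simp_all add: pderiv_add algebra_simps)

lemma smult_pow_aux: "smult (of_nat n) (P0 ^ (n - 1) * Q) * P0 = smult (of_nat n) (P0 ^ n * (Q::complex poly))"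
  by (cases n) (simp_all add: algebra_simps)

lemma Nrec_polypart:
  assumes "pderiv P * P0 = P * L"
  shows "Nrec P0 L (q * P) n = (pderiv ^^ n) q * P * P0 ^ n"
proof (induction n)
  case 0 then show ?case by simp
next
  case (Suc n)
  define qn where "qn = (pderiv ^^ n) q"
  have "Nrec P0 L (q * P) (Suc n) = pderiv (qn * P * P0 ^ n) * P0 - qn * P * P0 ^ n * (L + smult (of_nat n) (pderiv P0))"
    using Suc by (simp add: qn_def)
  also have "\<dots> = pderiv qn * P * P0 ^ Suc n + qn * P0 ^ n * (pderiv P * P0)
      + qn * P * (smult (of_nat n) (P0 ^ (n - 1) * pderiv P0) * P0)
      - qn * P * P0 ^ n * (L + smult (of_nat n) (pderiv P0))"
    by (simp add: pderiv_mult pderiv_power algebra_simps)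
  also have "\<dots> = pderiv qn * P * P0 ^ Suc n"
    unfolding smult_pow_aux assms by (simp add: algebra_simps)
  finally show ?case by (simp add: qn_def)
qed

lemma Nrec_deg:
  assumes "d \<ge> 1" "degree P0 = d" "lead_coeff P0 = 1" "degree L = d - 1" "lead_coeff L = of_nat p"
    "B \<noteq> 0" "degree B < p"
  shows "Nrec P0 L B n \<noteq> 0 \<and> degree (Nrec P0 L B n) = degree B + n * (d - 1)"
proof (induction n)
  case 0 then show ?case using assms by simp
next
  case (Suc n)
  define K where "K = L + smult (of_nat n) (pderiv P0)"
  have dK: "degree K \<le> d - 1"
    unfolding K_def using assms
    by (intro degree_add_le) (auto simp: degree_pderiv)
  have cK: "coeff K (d - 1) = of_nat (p + n * d)"
    unfolding K_def using assms by (simp add: coeff_pderiv)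
  have "p + n * d \<noteq> degree (Nrec P0 L B n)"
    using Suc assms by (simp add: algebra_simps)
  note st = step_degree[OF conjunct1[OF Suc] assms(1,2,3) dK cK this]
  have e: "degree (Nrec P0 L B n) + (d - 1) = degree B + Suc n * (d - 1)" using Suc by simp
  show ?case using e st by (simp add: K_def)
qed



fun Lp :: "nat \<Rightarrow> (nat \<Rightarrow> complex) \<Rightarrow> (nat \<Rightarrow> nat) \<Rightarrow> complex poly" where
  "Lp 0 zs r = 0"
| "Lp (Suc d) zs r = Lp d zs r * [:- zs d, 1:] + of_nat (r d) * pole_poly0 d zs"

lemma Lp_eq: "pderiv (pole_poly d zs r) * pole_poly0 d zs = pole_poly d zs r * Lp d zs r"
proof (induction d)
  case 0 then show ?case by (simp add: pole_poly_def pole_poly0_def)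
next
  case (Suc d)
  define X where "X = [:- zs d, 1:]"
  have pX: "pderiv X = 1" by (simp add: X_def pderiv_pCons)
  have P: "pole_poly (Suc d) zs r = pole_poly d zs r * X ^ r d" by (simp add: pole_poly_def X_def)
  have P0: "pole_poly0 (Suc d) zs = pole_poly0 d zs * X" by (simp add: pole_poly0_def X_def)
  have aux: "smult (of_nat (r d)) (X ^ (r d - 1)) * X = of_nat (r d) * X ^ r d"
    by (cases "r d") (simp_all add: of_nat_poly algebra_simps)
  have "pderiv (pole_poly (Suc d) zs r) * pole_poly0 (Suc d) zs
      = (pderiv (pole_poly d zs r) * pole_poly0 d zs) * X ^ r d * X
        + pole_poly d zs r * pole_poly0 d zs * (smult (of_nat (r d)) (X ^ (r d - 1)) * X)"
    unfolding P P0 by (simp add: pderiv_mult pderiv_power pX algebra_simps)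
  also have "\<dots> = pole_poly (Suc d) zs r * Lp (Suc d) zs r"
    unfolding Suc aux P by (simp add: X_def algebra_simps)
  finally show ?case .
qed

lemma P0_facts: "degree (pole_poly0 d zs) = d \<and> lead_coeff (pole_poly0 d zs) = 1"
proof -
  have d: "degree (\<Prod>i<d. [:- zs i, 1:]) = d" by (simp add: degree_prod_sum_eq)
  have l: "lead_coeff (\<Prod>i<d. [:- zs i, 1:]) = (\<Prod>i<d. lead_coeff [:- zs i, 1:])" by (rule lead_coeff_prod)
  show ?thesis unfolding pole_poly0_def using d l by simp
qed

lemma P_facts: "degree (pole_poly d zs r) = (\<Sum>i<d. r i) \<and> lead_coeff (pole_poly d zs r) = 1"
proof -
  have d: "degree (\<Prod>i<d. [:- zs i, 1:] ^ r i) = (\<Sum>i<d. r i)" by (simp add: degree_prod_sum_eq degree_power_eq)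
  have l: "lead_coeff (\<Prod>i<d. [:- zs i, 1:] ^ r i) = (\<Prod>i<d. lead_coeff ([:- zs i, 1:] ^ r i))" by (rule lead_coeff_prod)
  have l2: "\<And>i. lead_coeff ([:- zs i, 1:] ^ r i) = 1" by (simp add: lead_coeff_power)
  show ?thesis unfolding pole_poly_def using d l l2 by simp
qed

lemma L_facts:
  assumes "d \<ge> 1" "\<And>i. i < d \<Longrightarrow> r i \<ge> 1"
  shows "degree (Lp d zs r) = d - 1 \<and> lead_coeff (Lp d zs r) = of_nat (\<Sum>i<d. r i)"
proof -
  define p where "p = (\<Sum>i<d. r i)"
  define P where "P = pole_poly d zs r"
  define P0 where "P0 = pole_poly0 d zs"
  define L where "L = Lp d zs r"
  have "(\<Sum>i<d. (1::nat)) \<le> p" unfolding p_def using assms(2) by (intro sum_mono) auto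
  then have p1: "d \<le> p" by simp
  have dP: "degree P = p" "lead_coeff P = 1" using P_facts[of d zs r] unfolding P_def p_def by auto
  have dP0: "degree P0 = d" "lead_coeff P0 = 1" using P0_facts[of d zs] unfolding P0_def by auto
  have dpP: "degree (pderiv P) = p - 1" by (simp add: degree_pderiv dP)
  have lpP: "lead_coeff (pderiv P) = of_nat p"
    using dpP p1 assms(1) dP by (simp add: coeff_pderiv)
  have nz1: "pderiv P \<noteq> 0" using lpP p1 assms(1) by auto
  have nz2: "P0 \<noteq> 0" using dP0 by auto
  have eq: "pderiv P * P0 = P * L" unfolding P_def P0_def L_def by (rule Lp_eq)
  have "pderiv P * P0 \<noteq> 0" using nz1 nz2 by simp
  then have Lnz: "L \<noteq> 0" using eq by auto
  have Pnz: "P \<noteq> 0" using dP by auto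
  have "degree (pderiv P * P0) = p - 1 + d" using degree_mult_eq[OF nz1 nz2] dpP dP0 by simp
  moreover have "degree (P * L) = p + degree L" using degree_mult_eq[OF Pnz Lnz] dP by simp
  ultimately have "degree L = d - 1" using eq p1 assms(1) by simp
  moreover have "lead_coeff L = of_nat p"
    using eq lead_coeff_mult[of "pderiv P" P0] lead_coeff_mult[of P L] lpP dP dP0 by simp
  ultimately show ?thesis by (simp add: L_def p_def)
qed



lemma alg_aux:
  fixes a a' b b' c c' l k :: complex
  assumes "b \<noteq> 0" "c \<noteq> 0" "b' * c = b * l" "k * c = of_nat n * c ^ n"
  shows "(a' * (b * c ^ n) - a * (b' * c ^ n + b * (k * c'))) / ((b * c ^ n) * (b * c ^ n))
       = (a' * c - a * (l + of_nat n * c')) / (b * (c * c ^ n))"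
proof -
  define X where "X = a' * (b * c ^ n) - a * (b' * c ^ n + b * (k * c'))"
  define Y where "Y = a' * c - a * (l + of_nat n * c')"
  define B where "B = b * c ^ n"
  have "X * c = a' * b * c ^ n * c - a * c ^ n * (b' * c) - a * b * c' * (k * c)"
    unfolding X_def by (simp add: algebra_simps)
  also have "\<dots> = Y * B" unfolding assms(3,4) Y_def B_def by (simp add: algebra_simps)
  finally have XY: "X * c = Y * B" .
  have B0: "B \<noteq> 0" using assms by (simp add: B_def)
  have "X / (B * B) = Y / (B * c)"
    using XY B0 assms(2) by (simp add: field_simps power2_eq_square)
  then show ?thesis by (simp add: X_def Y_def B_def mult.assoc)
qed

lemma deriv_formula:
  fixes P P0 L A :: "complex poly"
  assumes eqL: "pderiv P * P0 = P * L"
  shows "\<forall>w. poly P w \<noteq> 0 \<and> poly P0 w \<noteq> 0 \<longrightarrow>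
     (deriv ^^ n) (\<lambda>w. poly A w / poly P w) w = poly (Nrec P0 L A n) w / (poly P w * poly P0 w ^ n)"
proof (induction n)
  case 0 then show ?case by simp
next
  case (Suc n)
  define S where "S = {w. poly P w \<noteq> 0 \<and> poly P0 w \<noteq> 0}"
  have oS: "open S"
  proof -
    have "open ({w. poly P w \<noteq> 0} \<inter> {w. poly P0 w \<noteq> 0})"
      by (intro open_Int open_Collect_neq) (auto intro: continuous_intros)
    then show ?thesis unfolding S_def by (simp add: Collect_conj_eq)
  qed
  define N where "N = Nrec P0 L A n"
  define G where "G = (\<lambda>w. poly N w / (poly P w * poly P0 w ^ n))"
  show ?case
  proof (intro allI impI)
    fix w assume w: "poly P w \<noteq> 0 \<and> poly P0 w \<noteq> 0"
    then have wS: "w \<in> S" by (simp add: S_def)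
    have ev: "eventually (\<lambda>x. (deriv ^^ n) (\<lambda>w. poly A w / poly P w) x = G x) (nhds w)"
      using eventually_nhds_in_open[OF oS wS]
      by eventually_elim (use Suc in \<open>auto simp: S_def G_def N_def\<close>)
    have "(deriv ^^ Suc n) (\<lambda>w. poly A w / poly P w) w = deriv G w"
      by (simp add: deriv_cong_ev[OF ev refl])
    also have "deriv G w = (poly (pderiv N) w * (poly P w * poly P0 w ^ n)
          - poly N w * (poly (pderiv P) w * poly P0 w ^ n + poly P w * ((of_nat n * poly P0 w ^ (n - 1)) * poly (pderiv P0) w)))
          / ((poly P w * poly P0 w ^ n) * (poly P w * poly P0 w ^ n))"
    proof -
      have d1: "((\<lambda>w. poly P w * poly P0 w ^ n) has_field_derivative
          (poly (pderiv P) w * poly P0 w ^ n + poly P w * ((of_nat n * poly P0 w ^ (n - 1)) * poly (pderiv P0) w))) (at w)"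
        by (auto intro!: derivative_eq_intros simp: algebra_simps)
      show ?thesis
        unfolding G_def by (rule DERIV_imp_deriv, rule DERIV_divide[OF poly_DERIV d1]) (use w in simp)
    qed
    also have "\<dots> = poly (Nrec P0 L A (Suc n)) w / (poly P w * poly P0 w ^ Suc n)"
    proof -
      have e1: "poly (pderiv P) w * poly P0 w = poly P w * poly L w"
        using arg_cong[OF eqL, of "\<lambda>p. poly p w"] by simp
      have e2: "(of_nat n * poly P0 w ^ (n - 1)) * poly P0 w = of_nat n * poly P0 w ^ n"
        by (cases n) auto
      have "poly (Nrec P0 L A (Suc n)) w = poly (pderiv N) w * poly P0 w - poly N w * (poly L w + of_nat n * poly (pderiv P0) w)"
        by (simp add: N_def)
      then show ?thesis using alg_aux[OF _ _ e1 e2] w by simp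
    qed
    finally show "(deriv ^^ Suc n) (\<lambda>w. poly A w / poly P w) w = poly (Nrec P0 L A (Suc n)) w / (poly P w * poly P0 w ^ Suc n)" .
  qed
qed



theorem lemma4p2:
  fixes d :: nat and zs :: "nat \<Rightarrow> complex" and r :: "nat \<Rightarrow> nat"
    and A :: "complex poly" and Q :: "complex \<Rightarrow> complex"
    and \<alpha> :: "nat \<Rightarrow> complex" and R :: "nat \<Rightarrow> complex poly"
  assumes "d \<ge> 1"
    and "inj_on zs {..<d}"
    and "\<And>i. i < d \<Longrightarrow> r i \<ge> 1"
    and "\<And>i. i < d \<Longrightarrow> poly A (zs i) \<noteq> 0"
    and "Q = (\<lambda>w. poly A w / poly (pole_poly d zs r) w)"
    and "\<And>n. n \<ge> 1 \<Longrightarrow> lead_coeff (R n) = 1"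
    and "\<And>n w. n \<ge> 1 \<Longrightarrow> w \<notin> zs ` {..<d} \<Longrightarrow>
           (deriv ^^ n) Q w = \<alpha> n * poly (R n) w / (poly (pole_poly d zs r) w * poly (pole_poly0 d zs) w ^ n)"
  shows "(\<lambda>n. real (degree (R n)) / real n) \<longlonglongrightarrow> real d - 1"
proof -
  define p where "p = (\<Sum>i<d. r i)"
  define P where "P = pole_poly d zs r"
  define P0 where "P0 = pole_poly0 d zs"
  define L where "L = Lp d zs r"
  have eqL: "pderiv P * P0 = P * L" unfolding P_def P0_def L_def by (rule Lp_eq)
  have LF: "degree L = d - 1" "lead_coeff L = of_nat p"
    using L_facts[where d=d and r=r and zs=zs, OF assms(1) assms(3)] unfolding L_def p_def by auto
  have PF: "degree P = p" "lead_coeff P = 1" using P_facts[of d zs r] unfolding P_def p_def by auto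
  have P0F: "degree P0 = d" "lead_coeff P0 = 1" using P0_facts[of d zs] unfolding P0_def by auto
  have polyP: "\<And>w. poly P w = (\<Prod>i<d. (w - zs i) ^ r i)" unfolding P_def pole_poly_def by (simp add: poly_prod)
  have polyP0: "\<And>w. poly P0 w = (\<Prod>i<d. (w - zs i))" unfolding P0_def pole_poly0_def by (simp add: poly_prod)
  have Snz: "poly P w \<noteq> 0 \<and> poly P0 w \<noteq> 0" if "w \<notin> zs ` {..<d}" for w
    using that unfolding polyP polyP0 by auto
  have Pz: "poly P (zs 0) = 0"
  proof -
    have "(zs 0 - zs 0) ^ r 0 = 0" using assms(1) assms(3)[of 0] by (simp add: power_0_left)
    then show ?thesis unfolding polyP using assms(1) by (intro prod_zero) auto
  qed
  have Pnz: "P \<noteq> 0" using PF by auto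
  define q where "q = A div P"
  define B where "B = A mod P"
  have AqB: "A = q * P + B" unfolding q_def B_def by simp
  have Bnz: "B \<noteq> 0"
  proof
    assume "B = 0"
    then have "poly A (zs 0) = 0" using AqB Pz by simp
    then show False using assms(4)[of 0] assms(1) by simp
  qed
  have Bdeg: "degree B < p" using degree_mod_less[OF Pnz, of A] Bnz PF unfolding B_def by auto
  have NB: "\<And>n. Nrec P0 L B n \<noteq> 0 \<and> degree (Nrec P0 L B n) = degree B + n * (d - 1)"
    by (rule Nrec_deg[OF assms(1) P0F LF Bnz Bdeg])
  have key: "degree (R n) = degree B + n * (d - 1)" if n: "n \<ge> Suc (degree q)" for n
  proof -
    have n1: "n \<ge> 1" using n by simp
    have NA: "Nrec P0 L A n = Nrec P0 L B n"
    proof -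
      have "Nrec P0 L A n = Nrec P0 L (q * P) n + Nrec P0 L B n"
        by (subst AqB) (rule Nrec_add)
      moreover have "(pderiv ^^ n) q = 0" using pderiv_funpow_zero n by auto
      ultimately show ?thesis using Nrec_polypart[OF eqL, of q n] by simp
    qed
    define D where "D = smult (\<alpha> n) (R n) - Nrec P0 L A n"
    have D0: "poly D w = 0" if w: "w \<notin> zs ` {..<d}" for w
    proof -
      have "(deriv ^^ n) (\<lambda>w. poly A w / poly P w) w = poly (Nrec P0 L A n) w / (poly P w * poly P0 w ^ n)"
        using deriv_formula[OF eqL, of n A] Snz[OF w] by blast
      moreover have "(deriv ^^ n) (\<lambda>w. poly A w / poly P w) w = \<alpha> n * poly (R n) w / (poly P w * poly P0 w ^ n)"
        using assms(7)[OF n1 w] assms(5) unfolding P_def P0_def by simp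
      ultimately have "\<alpha> n * poly (R n) w = poly (Nrec P0 L A n) w"
        using Snz[OF w] by (simp add: divide_cancel_right)
      then show ?thesis by (simp add: D_def)
    qed
    have "D = 0"
    proof (rule ccontr)
      assume "D \<noteq> 0"
      then have fin: "finite {w. poly D w = 0}" by (rule poly_roots_finite)
      have "UNIV \<subseteq> zs ` {..<d} \<union> {w. poly D w = 0}" using D0 by auto
      then have "finite (UNIV :: complex set)" using fin by (meson finite_Un finite_imageI finite_lessThan finite_subset)
      then show False using infinite_UNIV_char_0 by blast
    qed
    then have eq: "smult (\<alpha> n) (R n) = Nrec P0 L B n" using NA by (simp add: D_def)
    then have "\<alpha> n \<noteq> 0" using NB[of n] by auto
    then have "degree (R n) = degree (Nrec P0 L B n)" using eq by (metis degree_smult_eq)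
    then show ?thesis using NB[of n] by simp
  qed
  have ev: "eventually (\<lambda>n. real (degree B) / real n + (real d - 1) = real (degree (R n)) / real n) sequentially"
    using eventually_ge_at_top[of "Suc (degree q)"]
  proof eventually_elim
    case (elim n)
    have "real (degree (R n)) = real (degree B) + real n * (real d - 1)"
      using key[OF elim] assms(1) by (simp add: of_nat_diff)
    then show ?case using elim by (simp add: field_simps)
  qed
  have "(\<lambda>n. real (degree B) / real n + (real d - 1)) \<longlonglongrightarrow> 0 + (real d - 1)"
    by (intro tendsto_add lim_const_over_n tendsto_const)
  then show ?thesis using ev by (simp add: Lim_transform_eventually)
qed

end
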